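(* Let $K$ be a field of prime characteristic $p$ and $C$ a cyclic $p$-group of order $q$. For each integer $n\ge0$, $\Lambda^n(V_q)\in P_{KC}$, and $\alpha_1(\Lambda^n(V_q))=1$ if $n=0$ or $n=q$, and $\alpha_1(\Lambda^n(V_q))=0$ otherwise.
   Context: The indecomposable $KC$-modules up to isomorphism are $V_1,\dots,V_q$ with $\dim V_r=r$ ($V_q$ is the regular module); $R_{KC}$ is the Green ring with $\mathbb{Z}$-basis $V_1,\dots,V_q$ (addition from direct sum, multiplication from tensor product). $\Lambda^n$ is the $n$th exterior power. $P_{KC}$ is the $\mathbb{Z}$-span in $R_{KC}$ of all permutation modules for $C$ over $K$. For $A=\sum_i\alpha_i(A)V_i$, $\alpha_1(A)$ is the coefficient of $V_1$. *)

theory Defs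
  imports "Jordan_Normal_Form.Jordan_Normal_Form_Uniqueness" "Jordan_Normal_Form.DL_Rank_Submatrix"
    "HOL-Combinatorics.Permutations"
begin

text \<open>A finite-dimensional KC-module, C = <g> cyclic of order q, is represented by the
  square matrix of the generator g acting on column vectors.\<close>

text \<open>Permutation module K[X] of a finite C-set X = {0..<m}, g acting by sigma:
  g e_j = e_(sigma j).\<close>
definition perm_mat :: "nat \<Rightarrow> (nat \<Rightarrow> nat) \<Rightarrow> 'a :: field mat" where
  "perm_mat m \<sigma> = mat m m (\<lambda>(i,j). if \<sigma> j = i then 1 else 0)"

definition is_C_set :: "nat \<Rightarrow> nat \<Rightarrow> (nat \<Rightarrow> nat) \<Rightarrow> bool" where
  "is_C_set q m \<sigma> \<longleftrightarrow> \<sigma> permutes {..<m} \<and> (\<forall>x<m. (\<sigma> ^^ q) x = x)"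

text \<open>The regular module V_q = KC: C acting on itself, g acting as the q-cycle.\<close>
definition regular_mat :: "nat \<Rightarrow> 'a :: field mat" where
  "regular_mat q = perm_mat q (\<lambda>i. if i < q then (i + 1) mod q else i)"

text \<open>n-th exterior power: basis e_S (S an n-subset of {0..<d}, ordered as increasing lists),
  g acting by the n-th compound matrix (minors).\<close>
definition nsubsets :: "nat \<Rightarrow> nat \<Rightarrow> nat list list" where
  "nsubsets n d = filter (\<lambda>s. length s = n) (subseqs [0..<d])"

definition ext_pow :: "nat \<Rightarrow> 'a :: field mat \<Rightarrow> 'a mat" where
  "ext_pow n A = (let S = nsubsets n (dim_row A) in
     mat (length S) (length S)
       (\<lambda>(i,j). det (submatrix A (set (S ! i)) (set (S ! j)))))"

text \<open>green A f: the module A decomposes as the direct sum of the indecomposables V_r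
  (V_r = Jordan block of size r with eigenvalue 1), V_r occurring with multiplicity f r;
  i.e. f is the element of the Green ring R_KC given by A (coefficient alpha_r = f r).\<close>
definition green :: "'a :: field mat \<Rightarrow> (nat \<Rightarrow> int) \<Rightarrow> bool" where
  "green A f \<longleftrightarrow> (\<exists>n_as. jordan_nf A n_as \<and> (\<forall>(k,a)\<in>set n_as. a = 1) \<and>
      (\<forall>r. f r = int (length (filter (\<lambda>(k,a). k = r) n_as))))"

text \<open>P_KC: the Z-span in R_KC of the permutation modules.\<close>
definition in_PKC :: "'a :: field itself \<Rightarrow> nat \<Rightarrow> (nat \<Rightarrow> int) \<Rightarrow> bool" where
  "in_PKC _ q f \<longleftrightarrow> (\<exists>ms :: (int \<times> nat \<times> (nat \<Rightarrow> nat)) list. \<exists>gs.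
      length gs = length ms \<and>
      (\<forall>i<length ms. is_C_set q (fst (snd (ms ! i))) (snd (snd (ms ! i))) \<and>
         green (perm_mat (fst (snd (ms ! i))) (snd (snd (ms ! i))) :: 'a mat) (gs ! i)) \<and>
      (\<forall>r. f r = (\<Sum>i<length ms. fst (ms ! i) * (gs ! i) r)))"

end

theory Submission
  imports Defs
begin

lemma perm_mat_carrier[simp]: "perm_mat m f \<in> carrier_mat m m"
  "dim_row (perm_mat m f) = m" "dim_col (perm_mat m f) = m"
  by (auto simp: perm_mat_def)

lemma perm_mat_index[simp]: "i < m \<Longrightarrow> j < m \<Longrightarrow> perm_mat m f $$ (i,j) = (if f j = i then 1 else 0)"
  by (simp add: perm_mat_def)

lemma perm_mat_cong: "(\<And>x. x < m \<Longrightarrow> f x = g x) \<Longrightarrow> perm_mat m f = perm_mat m g"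
  by (rule eq_matI, auto)

lemma perm_mat_id: "(\<And>x. x < m \<Longrightarrow> f x = x) \<Longrightarrow> perm_mat m f = (1\<^sub>m m :: 'a::field mat)"
  by (rule eq_matI, auto)

lemma perm_mat_mult_left:
  assumes B: "B \<in> carrier_mat m k" and t: "t < m" and i: "i < k" and gt: "g t < m"
    and fg: "\<And>c. c < m \<Longrightarrow> f c = t \<longleftrightarrow> c = g t"
  shows "(perm_mat m f * (B :: 'a::field mat)) $$ (t,i) = B $$ (g t, i)"
proof -
  have "(perm_mat m f * B) $$ (t,i) = (\<Sum>c = 0..<m. (if f c = t then 1 else 0) * B $$ (c, i))"
    using B t i by (simp add: scalar_prod_def)
  also have "\<dots> = (\<Sum>c = 0..<m. if c = g t then B $$ (c, i) else 0)"
    by (rule sum.cong, auto simp: fg)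
  also have "\<dots> = B $$ (g t, i)" using gt by simp
  finally show ?thesis .
qed

lemma perm_mat_mult:
  assumes "\<And>j. j < m \<Longrightarrow> \<beta> j < m"
  shows "perm_mat m \<alpha> * perm_mat m \<beta> = (perm_mat m (\<alpha> \<circ> \<beta>) :: 'a::field mat)"
proof (rule eq_matI)
  fix i j assume i: "i < dim_row (perm_mat m (\<alpha> \<circ> \<beta>) :: 'a mat)" and j: "j < dim_col (perm_mat m (\<alpha> \<circ> \<beta>) :: 'a mat)"
  hence i: "i < m" and j: "j < m" by auto
  have "(perm_mat m \<alpha> * perm_mat m \<beta> :: 'a mat) $$ (i,j) = (\<Sum>c = 0..<m. (if \<alpha> c = i then 1 else 0) * (if \<beta> j = c then 1 else 0))"
    using i j by (simp add: scalar_prod_def)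
  also have "\<dots> = (\<Sum>c = 0..<m. if c = \<beta> j then (if \<alpha> c = i then 1 else 0) else (0::'a))"
    by (rule sum.cong, auto)
  also have "\<dots> = (if \<alpha> (\<beta> j) = i then 1 else 0)" using assms[OF j] by simp
  finally show "(perm_mat m \<alpha> * perm_mat m \<beta> :: 'a mat) $$ (i,j) = perm_mat m (\<alpha> \<circ> \<beta>) $$ (i,j)"
    using i j by simp
qed auto

lemma prime_power_choose:
  assumes p: "prime (p::nat)" and i: "0 < i" "i < p ^ j"
  shows "p dvd (p ^ j choose i)"
proof (rule ccontr)
  assume nd: "\<not> p dvd (p ^ j choose i)"
  obtain i' where i': "i = Suc i'" using i by (cases i, auto)
  obtain L' where L': "p ^ j = Suc L'" using i by (cases "p^j", auto)
  have eq: "p ^ j * (L' choose i') = (p ^ j choose i) * i"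
    using Suc_times_binomial_eq[of L' i'] unfolding i' L' by simp
  have "coprime p (p ^ j choose i)" using nd p by (simp add: prime_imp_coprime)
  hence "coprime (p ^ j) (p ^ j choose i)" by simp
  moreover have "p ^ j dvd (p ^ j choose i) * i" unfolding eq[symmetric] by simp
  ultimately have "p ^ j dvd i" using coprime_dvd_mult_right_iff by blast
  with i show False by (simp add: nat_dvd_not_less)
qed

lemma inv_exists_det1:
  assumes M: "M \<in> carrier_mat L L" and d: "det M \<noteq> (0::'a::field)"
  shows "\<exists>Mi. Mi \<in> carrier_mat L L \<and> M * Mi = 1\<^sub>m L \<and> Mi * M = 1\<^sub>m L"
proof -
  from det_non_zero_imp_unit[OF M d, of undefined]
  have "M \<in> Units (ring_mat TYPE('a) L undefined)" .
  thus ?thesis unfolding Units_def by (auto simp: ring_mat_simps)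
qed

lemma cycle_similar_jordan:
  assumes p: "prime (CHAR('a::field))" and L: "L = CHAR('a) ^ j"
  shows "similar_mat (perm_mat L (\<lambda>t. (t + L - 1) mod L) :: 'a mat) (jordan_block L 1)"
proof -
  let ?p = "CHAR('a)"
  have L0: "L > 0" using L p by (simp add: prime_gt_0_nat)
  define M :: "'a mat" where "M = mat L L (\<lambda>(t,i). of_nat (t choose i))"
  let ?P = "perm_mat L (\<lambda>t. (t + L - 1) mod L) :: 'a mat"
  let ?J = "jordan_block L (1::'a)"
  have Mc: "M \<in> carrier_mat L L" unfolding M_def by auto
  have choose0: "(of_nat (L choose i) :: 'a) = 0" if "0 < i" "i < L" for i
    using prime_power_choose[OF p that[unfolded L]] unfolding L[symmetric]
    by (simp add: of_nat_eq_0_iff_char_dvd)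
  have eq: "?P * M = M * ?J"
  proof (rule eq_matI)
    fix t i assume "t < dim_row (M * ?J)" "i < dim_col (M * ?J)"
    hence t: "t < L" and i: "i < L" using Mc by auto
    have "(?P * M) $$ (t,i) = M $$ (Suc t mod L, i)"
    proof (rule perm_mat_mult_left[OF Mc t i])
      show "Suc t mod L < L" using L0 by simp
      fix c assume c: "c < L"
      have st: "Suc t mod L = (if Suc t = L then 0 else Suc t)" using t by auto
      show "(c + L - 1) mod L = t \<longleftrightarrow> c = Suc t mod L"
      proof (cases c)
        case 0
        hence "(c + L - 1) mod L = L - 1" using L0 by simp
        thus ?thesis unfolding st using 0 L0 t by auto
      next
        case (Suc c')
        have "c + L - 1 = c' + L" using Suc by simp
        hence "(c + L - 1) mod L = c'" using c Suc by simp
        thus ?thesis unfolding st using Suc L0 t c by auto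
      qed
    qed
    also have "\<dots> = of_nat ((Suc t mod L) choose i)" unfolding M_def using L0 t i by simp
    finally have l: "(?P * M) $$ (t,i) = of_nat ((Suc t mod L) choose i)" .
    have "(M * ?J) $$ (t,i) = (\<Sum>c = 0..<L. M $$ (t,c) * ?J $$ (c,i))"
      using t i Mc by (simp add: scalar_prod_def)
    also have "\<dots> = (\<Sum>c = 0..<L. (if c = i then M $$ (t,c) else 0) + (if Suc c = i then M $$ (t,c) else 0))"
      by (rule sum.cong, insert i, auto)
    also have "\<dots> = M $$ (t,i) + (\<Sum>c = 0..<L. (if c = i - 1 \<and> 0 < i then M $$ (t,c) else 0))"
      unfolding sum.distrib using i by (auto intro!: sum.cong)
    also have "\<dots> = of_nat (t choose i) + (if 0 < i then of_nat (t choose (i - 1)) else 0)"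
      unfolding M_def using t i by (cases i, auto)
    finally have r: "(M * ?J) $$ (t,i) = of_nat (t choose i) + (if 0 < i then of_nat (t choose (i - 1)) else 0)" .
    show "(?P * M) $$ (t,i) = (M * ?J) $$ (t,i)"
      unfolding l r
    proof (cases "Suc t < L")
      case True
      thus "(of_nat ((Suc t mod L) choose i) :: 'a) = of_nat (t choose i) + (if 0 < i then of_nat (t choose (i - 1)) else 0)"
        by (cases i, auto)
    next
      case False
      hence tL: "Suc t = L" using t by auto
      hence m: "Suc t mod L = 0" by simp
      show "(of_nat ((Suc t mod L) choose i) :: 'a) = of_nat (t choose i) + (if 0 < i then of_nat (t choose (i - 1)) else 0)"
      proof (cases i)
        case (Suc i')
        have "(of_nat (t choose i) :: 'a) + of_nat (t choose (i - 1)) = of_nat (L choose i)"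
          unfolding tL[symmetric] Suc by simp
        also have "\<dots> = 0" using choose0[of i] i Suc by simp
        finally show ?thesis unfolding m using Suc by simp
      qed (simp add: m)
    qed
  qed (insert Mc, auto)
  have "det M = prod_list (diag_mat M)"
    by (rule det_lower_triangular[OF _ Mc], auto simp: M_def binomial_eq_0)
  also have "\<dots> = 1" unfolding M_def diag_mat_def
    by (rule prod_list_neutral, auto)
  finally have "det M \<noteq> 0" by simp
  from inv_exists_det1[OF Mc this] obtain Mi where Mi: "Mi \<in> carrier_mat L L" "M * Mi = 1\<^sub>m L" "Mi * M = 1\<^sub>m L" by auto
  have "?P = ?P * (M * Mi)" using Mi by simp
  also have "\<dots> = (?P * M) * Mi" using Mi Mc by (simp add: assoc_mult_mat[of _ L L _ L _ L])
  also have "\<dots> = M * ?J * Mi" unfolding eq ..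
  finally have "?P = M * ?J * Mi" .
  hence "similar_mat_wit ?P ?J M Mi"
    by (intro similar_mat_witI[of _ _ L], insert Mi Mc, auto)
  thus ?thesis unfolding similar_mat_def by auto
qed

lemma funpow_lt: "(\<And>x. x < m \<Longrightarrow> \<tau> x < m) \<Longrightarrow> x < m \<Longrightarrow> (\<tau> ^^ i) x < m"
  by (induct i, auto)

lemma funpow_inj: assumes "\<forall>x<m. \<tau> x < m" "inj_on \<tau> {..<m}"
  shows "inj_on (\<tau> ^^ i) {..<m}"
proof (induct i)
  case (Suc i)
  have "inj_on (\<tau> \<circ> (\<tau> ^^ i)) {..<m}"
    by (rule comp_inj_on[OF Suc], rule inj_on_subset[OF assms(2)], insert funpow_lt[of m \<tau>] assms(1), auto)
  thus ?case by (simp add: o_def)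
qed simp

lemma funpow_add_apply: "(f ^^ (a + b)) x = (f ^^ a) ((f ^^ b) x)"
  by (simp add: funpow_add)

lemma funpow_mult_period: "(f ^^ L) x = x \<Longrightarrow> (f ^^ (c * L)) x = x"
  by (induct c, auto simp: funpow_add_apply)

lemma perm_jordan:
  assumes p: "prime (CHAR('a::field))" and q: "q = CHAR('a) ^ k"
  shows "(\<And>x. x < m \<Longrightarrow> \<tau> x < m) \<Longrightarrow> inj_on \<tau> {..<m} \<Longrightarrow> (\<And>x. x < m \<Longrightarrow> (\<tau> ^^ q) x = x) \<Longrightarrow>
    \<exists>n_as. jordan_nf (perm_mat m \<tau> :: 'a mat) n_as \<and> (\<forall>(k,a)\<in>set n_as. a = 1) \<and>
       length (filter (\<lambda>(k,a). k = 1) n_as) = card {x. x < m \<and> \<tau> x = x}"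
proof (induct m arbitrary: \<tau> rule: less_induct)
  case (less m \<tau>)
  note lt = less(2) and inj = less(3) and per = less(4)
  show ?case
  proof (cases "m = 0")
    case True
    have e: "perm_mat 0 \<tau> = (0\<^sub>m 0 0 :: 'a mat)" by (rule eq_matI, auto)
    have "jordan_nf (perm_mat m \<tau> :: 'a mat) []" unfolding jordan_nf_def jordan_matrix_def True e
      by (auto intro!: similar_mat_refl[of _ 0])
    thus ?thesis using True by (intro exI[of _ "[]"], auto)
  next
    case False
    hence m0: "0 < m" by auto
    have q0: "0 < q" using q p by (simp add: prime_gt_0_nat)
    define L where "L = (LEAST l. 0 < l \<and> (\<tau> ^^ l) 0 = 0)"
    have ex: "0 < q \<and> (\<tau> ^^ q) 0 = 0" using q0 per[OF m0] by auto
    have Lp: "0 < L \<and> (\<tau> ^^ L) 0 = 0" unfolding L_def by (rule LeastI[of _ q], rule ex)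
    hence L0: "0 < L" and tL: "(\<tau> ^^ L) 0 = 0" by blast+
    have Lmin: "(\<tau> ^^ l) 0 \<noteq> 0" if "0 < l" "l < L" for l
      using not_less_Least[of l "\<lambda>l. 0 < l \<and> (\<tau> ^^ l) 0 = 0", folded L_def] that by auto
    have "(\<tau> ^^ q) 0 = (\<tau> ^^ (q mod L)) ((\<tau> ^^ (q div L * L)) 0)"
      by (subst funpow_add_apply[symmetric], simp)
    also have "\<dots> = (\<tau> ^^ (q mod L)) 0" using funpow_mult_period[OF tL] by simp
    finally have "(\<tau> ^^ (q mod L)) 0 = 0" using per[OF m0] by simp
    with Lmin[of "q mod L"] L0 have "q mod L = 0" using mod_less_divisor by blast
    hence "L dvd q" by auto
    then obtain j where Lj: "L = CHAR('a) ^ j" unfolding q using divides_primepow_nat[OF p] by auto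
    have powlt: "\<And>x i. x < m \<Longrightarrow> (\<tau> ^^ i) x < m" by (rule funpow_lt, rule lt)
    have powinj: "\<And>i. inj_on (\<tau> ^^ i) {..<m}" using funpow_inj[of m \<tau>] lt inj by auto
    have expinj: "a = b" if a: "0 < a" "a \<le> L" and b: "0 < b" "b \<le> L" and eq: "(\<tau> ^^ a) 0 = (\<tau> ^^ b) 0" for a b
    proof (rule ccontr)
      assume "a \<noteq> b"
      then consider "a < b" | "b < a" by linarith
      thus False
      proof cases
        case 1
        have "(\<tau> ^^ a) ((\<tau> ^^ (b - a)) 0) = (\<tau> ^^ a) 0" using eq 1
          by (simp add: funpow_add_apply[symmetric])
        hence "(\<tau> ^^ (b - a)) 0 = 0" using inj_onD[OF powinj[of a]] powlt[OF m0] m0 by auto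
        thus False using Lmin[of "b - a"] 1 a b by auto
      next
        case 2
        have "(\<tau> ^^ b) ((\<tau> ^^ (a - b)) 0) = (\<tau> ^^ b) 0" using eq 2
          by (simp add: funpow_add_apply[symmetric])
        hence "(\<tau> ^^ (a - b)) 0 = 0" using inj_onD[OF powinj[of b]] powlt[OF m0] m0 by auto
        thus False using Lmin[of "a - b"] 2 a b by auto
      qed
    qed
    define r0 where "r0 i = (\<tau> ^^ (L - i)) 0" for i
    have r0lt: "r0 i < m" for i unfolding r0_def using powlt[OF m0] .
    have r0inj: "inj_on r0 {..<L}"
    proof (rule inj_onI)
      fix a b assume a: "a \<in> {..<L}" and b: "b \<in> {..<L}" and eq: "r0 a = r0 b"
      hence "L - a = L - b" using expinj[of "L - a" "L - b"] unfolding r0_def by auto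
      thus "a = b" using a b by auto
    qed
    have r0dec: "\<tau> (r0 i) = r0 ((i + L - 1) mod L)" if i: "i < L" for i
    proof (cases i)
      case 0
      have "(L - 1) mod L = L - 1" using L0 by simp
      moreover have "\<tau> ((\<tau> ^^ L) 0) = \<tau> 0" using tL by simp
      ultimately show ?thesis unfolding r0_def 0 using L0
        by (simp add: funpow_swap1)
    next
      case (Suc i')
      have "i + L - 1 = i' + L" using Suc by simp
      hence "(i + L - 1) mod L = i'" using i Suc by simp
      moreover have "L - i' = Suc (L - i)" using i Suc by simp
      ultimately show ?thesis unfolding r0_def by simp
    qed
    define Orb where "Orb = r0 ` {..<L}"
    define Cm where "Cm = {..<m} - Orb"
    have Orbsub: "Orb \<subseteq> {..<m}" unfolding Orb_def using r0lt by auto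
    have cardOrb: "card Orb = L" unfolding Orb_def using card_image[OF r0inj] by simp
    have Lm: "L \<le> m" using card_mono[OF _ Orbsub] cardOrb by simp
    have cardC: "card Cm = m - L" unfolding Cm_def using card_Diff_subset[OF _ Orbsub] cardOrb Orbsub
      by (simp add: finite_subset)
    from ex_bij_betw_nat_finite[of Cm] cardC obtain h where h: "bij_betw h {..<m - L} Cm"
      unfolding Cm_def by (auto simp: atLeast0LessThan)
    define hi where "hi = inv_into {..<m - L} h"
    have hi: "bij_betw hi Cm {..<m - L}" unfolding hi_def by (rule bij_betw_inv_into[OF h])
    have hih: "y < m - L \<Longrightarrow> hi (h y) = y" for y unfolding hi_def using bij_betw_inv_into_left[OF h] by auto
    have hhi: "z \<in> Cm \<Longrightarrow> h (hi z) = z" for z unfolding hi_def using bij_betw_inv_into_right[OF h] by auto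
    have hC: "y < m - L \<Longrightarrow> h y \<in> Cm" for y using h unfolding bij_betw_def by auto
    have hiC: "z \<in> Cm \<Longrightarrow> hi z < m - L" for z using hi unfolding bij_betw_def by auto
    have tC: "\<tau> x \<in> Cm" if x: "x \<in> Cm" for x
    proof -
      have xm: "x < m" using x unfolding Cm_def by auto
      have "\<tau> x \<notin> Orb"
      proof
        assume "\<tau> x \<in> Orb"
        then obtain i where i: "i < L" and eq: "\<tau> x = r0 i" unfolding Orb_def by auto
        let ?i = "Suc i mod L"
        have "((?i + L - 1) mod L) = i"
        proof (cases "Suc i = L")
          case True
          thus ?thesis using L0 by simp
        next
          case False
          hence "Suc i mod L = Suc i" using i by simp
          thus ?thesis using i by simp
        qed
        hence "\<tau> (r0 ?i) = r0 i" using r0dec[of ?i] L0 by simp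
        hence "x = r0 ?i" using inj_onD[OF inj, of x "r0 ?i"] eq xm r0lt by auto
        thus False using x L0 unfolding Cm_def Orb_def by auto
      qed
      thus ?thesis using lt[OF xm] unfolding Cm_def by auto
    qed
    define \<tau>' where "\<tau>' y = (if y < m - L then hi (\<tau> (h y)) else y)" for y
    have Cm_lt: "z \<in> Cm \<Longrightarrow> z < m" for z unfolding Cm_def by auto
    have t'lt: "\<tau>' y < m - L" if y: "y < m - L" for y 
      unfolding \<tau>'_def using hiC[OF tC[OF hC[OF y]]] y by simp
    have t'inj: "inj_on \<tau>' {..<m - L}"
    proof (rule inj_onI)
      fix x y assume x: "x \<in> {..<m - L}" and y: "y \<in> {..<m - L}" and eq: "\<tau>' x = \<tau>' y"
      from x y have x': "x < m - L" and y': "y < m - L" by auto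
      from eq have "h (hi (\<tau> (h x))) = h (hi (\<tau> (h y)))" unfolding \<tau>'_def using x' y' by simp
      hence "\<tau> (h x) = \<tau> (h y)" unfolding hhi[OF tC[OF hC[OF x']]] hhi[OF tC[OF hC[OF y']]] .
      hence "h x = h y" using inj_onD[OF inj _ _ _] Cm_lt[OF hC[OF x']] Cm_lt[OF hC[OF y']] by simp
      hence "hi (h x) = hi (h y)" by simp
      thus "x = y" unfolding hih[OF x'] hih[OF y'] .
    qed
    have t'pow: "(\<tau>' ^^ i) y = hi ((\<tau> ^^ i) (h y))" if y: "y < m - L" for i y
    proof (induct i)
      case 0
      thus ?case using hih y by simp
    next
      case (Suc i)
      have C: "(\<tau> ^^ i) (h y) \<in> Cm" by (induct i, insert hC[OF y] tC, auto)
      have "(\<tau>' ^^ Suc i) y = \<tau>' (hi ((\<tau> ^^ i) (h y)))" using Suc by simp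
      also have "\<dots> = hi (\<tau> ((\<tau> ^^ i) (h y)))" unfolding \<tau>'_def using hiC[OF C] hhi[OF C] by simp
      finally show ?case by simp
    qed
    have t'per: "(\<tau>' ^^ q) y = y" if "y < m - L" for y
      unfolding t'pow[OF that] using per[of "h y"] hC[OF that] hih[OF that] unfolding Cm_def by auto
    have mL: "m - L < m" using L0 m0 by auto
    have "\<exists>n_as. jordan_nf (perm_mat (m - L) \<tau>' :: 'a mat) n_as \<and> (\<forall>(k,a)\<in>set n_as. a = 1) \<and>
       length (filter (\<lambda>(k,a). k = 1) n_as) = card {x. x < m - L \<and> \<tau>' x = x}"
      by (rule less(1)[OF mL], rule t'lt, assumption, rule t'inj, rule t'per, assumption)
    then obtain n_as' where jnf': "jordan_nf (perm_mat (m - L) \<tau>' :: 'a mat) n_as'"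
      and ev': "\<forall>(k,a)\<in>set n_as'. a = 1"
      and cnt': "length (filter (\<lambda>(k,a). k = 1) n_as') = card {x. x < m - L \<and> \<tau>' x = x}" by blast
    define \<rho> where "\<rho> i = (if i < L then r0 i else h (i - L))" for i
    have hinj: "inj_on h {..<m - L}" using h unfolding bij_betw_def by auto
    have rlt: "\<rho> i < m" if i: "i < m" for i
    proof (cases "i < L")
      case True thus ?thesis unfolding \<rho>_def using r0lt by simp
    next
      case False
      hence "i - L < m - L" using i by auto
      thus ?thesis unfolding \<rho>_def using False Cm_lt[OF hC] by simp
    qed
    have r0Orb: "i < L \<Longrightarrow> r0 i \<in> Orb" for i unfolding Orb_def by auto
    have rinj: "inj_on \<rho> {..<m}"
    proof (rule inj_onI)
      fix a b assume a: "a \<in> {..<m}" and b: "b \<in> {..<m}" and eq: "\<rho> a = \<rho> b"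
      show "a = b"
      proof (cases "a < L"; cases "b < L")
        assume "a < L" "b < L"
        thus ?thesis using eq inj_onD[OF r0inj] unfolding \<rho>_def by auto
      next
        assume "a < L" "\<not> b < L"
        hence "r0 a \<in> Orb" "h (b - L) \<in> Cm" using r0Orb hC b by auto
        thus ?thesis using eq `a < L` `\<not> b < L` unfolding \<rho>_def Cm_def by auto
      next
        assume "\<not> a < L" "b < L"
        hence "r0 b \<in> Orb" "h (a - L) \<in> Cm" using r0Orb hC a by auto
        thus ?thesis using eq `\<not> a < L` `b < L` unfolding \<rho>_def Cm_def by auto
      next
        assume "\<not> a < L" "\<not> b < L"
        hence "h (a - L) = h (b - L)" "a - L < m - L" "b - L < m - L" using eq a b unfolding \<rho>_def by auto
        hence "a - L = b - L" using inj_onD[OF hinj] by auto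
        thus ?thesis using `\<not> a < L` `\<not> b < L` by auto
      qed
    qed
    have rimg: "\<rho> ` {..<m} = {..<m}" by (rule endo_inj_surj, insert rlt rinj, auto)
    define \<rho>i where "\<rho>i = inv_into {..<m} \<rho>"
    have rri: "x < m \<Longrightarrow> \<rho> (\<rho>i x) = x" for x unfolding \<rho>i_def by (rule f_inv_into_f, insert rimg, auto)
    have rir: "i < m \<Longrightarrow> \<rho>i (\<rho> i) = i" for i unfolding \<rho>i_def by (rule inv_into_f_f[OF rinj], auto)
    have rilt: "x < m \<Longrightarrow> \<rho>i x < m" for x unfolding \<rho>i_def using inv_into_into[of x \<rho> "{..<m}"] rimg by auto
    define \<tau>2 where "\<tau>2 = \<rho>i \<circ> \<tau> \<circ> \<rho>"
    have t2lt: "j < m \<Longrightarrow> \<tau>2 j < m" for j unfolding \<tau>2_def using rilt lt rlt by simp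
    have t2low: "\<tau>2 j = (j + L - 1) mod L" if j: "j < L" for j
    proof -
      have d: "(j + L - 1) mod L < L" using L0 by simp
      have "\<tau> (\<rho> j) = \<rho> ((j + L - 1) mod L)" unfolding \<rho>_def using j d r0dec[OF j] by simp
      thus ?thesis unfolding \<tau>2_def using rir d Lm by simp
    qed
    have t2high: "\<tau>2 j = L + \<tau>' (j - L)" if j: "L \<le> j" "j < m" for j
    proof -
      have jL: "j - L < m - L" using j by auto
      have t': "\<tau>' (j - L) = hi (\<tau> (h (j - L)))" unfolding \<tau>'_def using jL by simp
      have "\<tau> (\<rho> j) = \<tau> (h (j - L))" unfolding \<rho>_def using j by simp
      also have "\<dots> = h (\<tau>' (j - L))" unfolding t' hhi[OF tC[OF hC[OF jL]]] ..
      also have "\<dots> = \<rho> (L + \<tau>' (j - L))" unfolding \<rho>_def by simp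
      finally have "\<tau> (\<rho> j) = \<rho> (L + \<tau>' (j - L))" .
      moreover have "L + \<tau>' (j - L) < m" using t'lt[OF jL] Lm by simp
      ultimately show ?thesis unfolding \<tau>2_def using rir by simp
    qed
    let ?dec = "\<lambda>t. (t + L - 1) mod L"
    have blk: "perm_mat m \<tau>2 = four_block_mat (perm_mat L ?dec) (0\<^sub>m L (m - L)) (0\<^sub>m (m - L) L) (perm_mat (m - L) \<tau>' :: 'a mat)"
    proof (rule eq_matI)
      fix i j assume "i < dim_row (four_block_mat (perm_mat L ?dec) (0\<^sub>m L (m - L)) (0\<^sub>m (m - L) L) (perm_mat (m - L) \<tau>' :: 'a mat))"
        "j < dim_col (four_block_mat (perm_mat L ?dec) (0\<^sub>m L (m - L)) (0\<^sub>m (m - L) L) (perm_mat (m - L) \<tau>' :: 'a mat))"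
      hence i: "i < m" and j: "j < m" using Lm by auto
      have d: "?dec j < L" using L0 by simp
      show "perm_mat m \<tau>2 $$ (i, j) = four_block_mat (perm_mat L ?dec) (0\<^sub>m L (m - L)) (0\<^sub>m (m - L) L) (perm_mat (m - L) \<tau>' :: 'a mat) $$ (i, j)"
      proof (cases "j < L")
        case True
        thus ?thesis using i j t2low[OF True] d Lm by auto
      next
        case False
        have jL: "j - L < m - L" using j False by auto
        show ?thesis using i j t2high[of j] False t'lt[OF jL] Lm by auto
      qed
    qed (insert Lm, auto)
    have sim1: "similar_mat (perm_mat m \<tau> :: 'a mat) (perm_mat m \<tau>2)"
    proof -
      have "perm_mat m \<rho> * perm_mat m \<rho>i = (perm_mat m (\<rho> \<circ> \<rho>i) :: 'a mat)" by (rule perm_mat_mult, rule rilt)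
      also have "\<dots> = 1\<^sub>m m" by (rule perm_mat_id, simp add: rri)
      finally have 1: "perm_mat m \<rho> * perm_mat m \<rho>i = (1\<^sub>m m :: 'a mat)" .
      have "perm_mat m \<rho>i * perm_mat m \<rho> = (perm_mat m (\<rho>i \<circ> \<rho>) :: 'a mat)" by (rule perm_mat_mult, rule rlt)
      also have "\<dots> = 1\<^sub>m m" by (rule perm_mat_id, simp add: rir)
      finally have 2: "perm_mat m \<rho>i * perm_mat m \<rho> = (1\<^sub>m m :: 'a mat)" .
      have e3a: "perm_mat m \<rho> * perm_mat m \<tau>2 = (perm_mat m (\<rho> \<circ> \<tau>2) :: 'a mat)"
        by (rule perm_mat_mult, rule t2lt)
      have e3b: "perm_mat m (\<rho> \<circ> \<tau>2) * perm_mat m \<rho>i = (perm_mat m (\<rho> \<circ> \<tau>2 \<circ> \<rho>i) :: 'a mat)"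
        by (rule perm_mat_mult, rule rilt)
      have e3c: "perm_mat m (\<rho> \<circ> \<tau>2 \<circ> \<rho>i) = (perm_mat m \<tau> :: 'a mat)"
      proof (rule perm_mat_cong)
        fix x assume x: "x < m"
        have "\<rho> (\<rho>i x) = x" using rri[OF x] .
        moreover have "\<rho> (\<rho>i (\<tau> x)) = \<tau> x" using rri[OF lt[OF x]] .
        ultimately show "(\<rho> \<circ> \<tau>2 \<circ> \<rho>i) x = \<tau> x" unfolding \<tau>2_def by simp
      qed
      have 3: "perm_mat m \<tau> = (perm_mat m \<rho> * perm_mat m \<tau>2 * perm_mat m \<rho>i :: 'a mat)"
        unfolding e3a e3b e3c ..
      have "similar_mat_wit (perm_mat m \<tau> :: 'a mat) (perm_mat m \<tau>2) (perm_mat m \<rho>) (perm_mat m \<rho>i)"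
        by (rule similar_mat_witI[OF 1 2 3], auto)
      thus ?thesis unfolding similar_mat_def by blast
    qed
    from jnf' have sim': "similar_mat (perm_mat (m - L) \<tau>' :: 'a mat) (jordan_matrix n_as')"
      and n0': "0 \<notin> fst ` set n_as'" unfolding jordan_nf_def by auto
    from similar_matD[OF sim'] obtain n P Q where "{perm_mat (m - L) \<tau>' :: 'a mat, jordan_matrix n_as', P, Q} \<subseteq> carrier_mat n n"
      by blast
    hence "jordan_matrix n_as' \<in> carrier_mat n n" and "n = m - L" by auto
    hence JC: "jordan_matrix n_as' \<in> carrier_mat (m - L) (m - L)" by simp
    have sim2: "similar_mat (four_block_mat (perm_mat L ?dec) (0\<^sub>m L (m - L)) (0\<^sub>m (m - L) L) (perm_mat (m - L) \<tau>' :: 'a mat))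
       (four_block_mat (jordan_block L 1) (0\<^sub>m L (m - L)) (0\<^sub>m (m - L) L) (jordan_matrix n_as'))"
      by (rule similar_mat_four_block_0_0[OF cycle_similar_jordan[OF p Lj] sim'], auto)
    have jm: "jordan_matrix ((L, 1) # n_as') = four_block_mat (jordan_block L (1::'a)) (0\<^sub>m L (m - L)) (0\<^sub>m (m - L) L) (jordan_matrix n_as')"
      using JC unfolding jordan_matrix_def by (simp add: Let_def)
    have jnf: "jordan_nf (perm_mat m \<tau> :: 'a mat) ((L, 1) # n_as')"
      unfolding jordan_nf_def jm using similar_mat_trans[OF sim1[unfolded blk] sim2] n0' L0 by auto
    have fixO: "{x \<in> Orb. \<tau> x = x} = (if L = 1 then {0} else {})"
    proof (cases "L = 1")
      case True
      have "Orb = {r0 0}" unfolding Orb_def True by auto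
      moreover have "r0 0 = 0" unfolding r0_def using tL True by simp
      moreover have "\<tau> 0 = 0" using tL True by simp
      ultimately show ?thesis using True by auto
    next
      case False
      have "\<tau> x \<noteq> x" if x: "x \<in> Orb" for x
      proof -
        from x obtain i where i: "i < L" and xi: "x = r0 i" unfolding Orb_def by auto
        have d: "?dec i < L" using L0 by simp
        have "?dec i \<noteq> i"
        proof (cases i)
          case 0 thus ?thesis using False L0 by simp
        next
          case (Suc i')
          have "i + L - 1 = i' + L" using Suc by simp
          thus ?thesis using i Suc by simp
        qed
        hence "r0 (?dec i) \<noteq> r0 i" using inj_onD[OF r0inj, of "?dec i" i] d i by auto
        thus ?thesis unfolding xi r0dec[OF i] .
      qed
      thus ?thesis using False by auto
    qed
    have fixC: "{x \<in> Cm. \<tau> x = x} = h ` {y. y < m - L \<and> \<tau>' y = y}"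
    proof (intro equalityI subsetI)
      fix x assume "x \<in> {x \<in> Cm. \<tau> x = x}"
      hence x: "x \<in> Cm" and tx: "\<tau> x = x" by auto
      have y: "hi x < m - L" using hiC[OF x] .
      have "\<tau>' (hi x) = hi x" unfolding \<tau>'_def using y hhi[OF x] tx by simp
      thus "x \<in> h ` {y. y < m - L \<and> \<tau>' y = y}" using y hhi[OF x] by force
    next
      fix x assume "x \<in> h ` {y. y < m - L \<and> \<tau>' y = y}"
      then obtain y where y: "y < m - L" and ty: "\<tau>' y = y" and xy: "x = h y" by auto
      have "h (\<tau>' y) = \<tau> (h y)" unfolding \<tau>'_def using y hhi[OF tC[OF hC[OF y]]] by simp
      thus "x \<in> {x \<in> Cm. \<tau> x = x}" using ty xy hC[OF y] by simp
    qed
    have "{x. x < m \<and> \<tau> x = x} = {x \<in> Orb. \<tau> x = x} \<union> {x \<in> Cm. \<tau> x = x}"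
      using Orbsub unfolding Cm_def by auto
    hence "card {x. x < m \<and> \<tau> x = x} = card {x \<in> Orb. \<tau> x = x} + card {x \<in> Cm. \<tau> x = x}"
      by (simp, subst card_Un_disjoint, auto simp: Cm_def Orb_def)
    also have "card {x \<in> Cm. \<tau> x = x} = card {y. y < m - L \<and> \<tau>' y = y}"
      unfolding fixC by (rule card_image, rule inj_on_subset[OF hinj], auto)
    also have "card {x \<in> Orb. \<tau> x = x} = (if L = 1 then 1 else 0)" unfolding fixO by simp
    finally have cnt: "card {x. x < m \<and> \<tau> x = x} = (if L = 1 then 1 else 0) + card {y. y < m - L \<and> \<tau>' y = y}" .
    show ?thesis
      by (rule exI[of _ "(L, 1) # n_as'"], insert jnf ev' cnt cnt', auto)
  qed
qed

lemma subseqs_sorted: "sorted_wrt (<) xs \<Longrightarrow> ys \<in> set (subseqs xs) \<Longrightarrow> sorted_wrt (<) (ys :: nat list) \<and> set ys \<subseteq> set xs"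
proof (induct xs arbitrary: ys)
  case Nil thus ?case by simp
next
  case (Cons x xs)
  from Cons(3) consider zs where "ys = x # zs" "zs \<in> set (subseqs xs)" | "ys \<in> set (subseqs xs)"
    by (auto simp: Let_def)
  thus ?case
  proof cases
    case 1
    from Cons(1)[OF _ 1(2)] Cons(2) have "sorted_wrt (<) zs" "set zs \<subseteq> set xs" by auto
    thus ?thesis using 1 Cons(2) by auto
  next
    case 2
    from Cons(1)[OF _ 2] Cons(2) show ?thesis by auto
  qed
qed

lemma strict_sorted_less_index:
  assumes s: "sorted_wrt (<) (s :: nat list)" and k: "k < length s" and a: "a < length s"
    and lt: "s ! a < s ! k" shows "a < k"
proof (rule ccontr)
  assume "\<not> a < k"
  hence "k = a \<or> k < a" by auto
  thus False using sorted_wrt_nth_less[OF s, of k a] a lt by auto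
qed

lemma pick_sorted: assumes s: "sorted_wrt (<) (s :: nat list)"
  shows "a < length s \<Longrightarrow> pick (set s) a = s ! a"
proof (induct a)
  case 0
  show ?case unfolding pick.simps
  proof (rule Least_equality)
    show "s ! 0 \<in> set s" using 0 by simp
    fix y assume "y \<in> set s"
    then obtain k where k: "k < length s" "y = s ! k" by (auto simp: in_set_conv_nth)
    show "s ! 0 \<le> y" using sorted_wrt_nth_less[OF s, of 0 k] k by (cases k, auto)
  qed
next
  case (Suc a)
  hence IH: "pick (set s) a = s ! a" by auto
  show ?case unfolding pick.simps IH
  proof (rule Least_equality)
    show "s ! Suc a \<in> set s \<and> s ! a < s ! Suc a" using Suc(2) sorted_wrt_nth_less[OF s, of a "Suc a"] by auto
    fix y assume y: "y \<in> set s \<and> s ! a < y"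
    then obtain k where k: "k < length s" "y = s ! k" by (auto simp: in_set_conv_nth)
    have "a < k" using strict_sorted_less_index[OF s k(1), of a] Suc(2) y k by auto
    thus "s ! Suc a \<le> y" using sorted_wrt_nth_less[OF s, of "Suc a" k] k by (cases "k = Suc a", auto)
  qed
qed

definition sig :: "nat \<Rightarrow> nat \<Rightarrow> nat" where
  "sig q i = (if i < q then (i + 1) mod q else i)"

lemma sig_lt: "x < q \<Longrightarrow> sig q x < q" unfolding sig_def by auto

lemma sig_inj: "inj_on (sig q) {..<q}"
proof (rule inj_onI)
  fix x y assume "x \<in> {..<q}" "y \<in> {..<q}" "sig q x = sig q y"
  hence x: "x < q" and y: "y < q" and e: "(x + 1) mod q = (y + 1) mod q" unfolding sig_def by auto
  have "(x + 1) mod q = (if x + 1 = q then 0 else x + 1)" using x by auto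
  moreover have "(y + 1) mod q = (if y + 1 = q then 0 else y + 1)" using y by auto
  ultimately show "x = y" using e x y by (auto split: if_splits)
qed

lemma sig_pow: "x < q \<Longrightarrow> (sig q ^^ k) x = (x + k) mod q"
proof (induct k)
  case (Suc k)
  have "(x + k) mod q < q" using Suc by auto
  have "(sig q ^^ Suc k) x = sig q ((sig q ^^ k) x)" by simp
  also have "\<dots> = sig q ((x + k) mod q)" using Suc by simp
  also have "\<dots> = ((x + k) mod q + 1) mod q" using \<open>(x + k) mod q < q\<close> unfolding sig_def by simp
  also have "\<dots> = (x + Suc k) mod q" by (simp add: mod_Suc_eq)
  finally show ?case .
qed simp

lemma sig_img: "A \<subseteq> {..<q} \<Longrightarrow> sig q ` A \<subseteq> {..<q}" using sig_lt by auto

lemma sig_card: "A \<subseteq> {..<q} \<Longrightarrow> card (sig q ` A) = card A"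
  by (rule card_image, rule inj_on_subset[OF sig_inj])

lemma sig_invariant: assumes A: "A \<subseteq> {..<q}" and inv: "sig q ` A = A" and ne: "A \<noteq> {}"
  shows "A = {..<q}"
proof -
  from ne obtain x0 where x0: "x0 \<in> A" by auto
  hence x0q: "x0 < q" using A by auto
  have all: "(x0 + k) mod q \<in> A" for k
  proof (induct k)
    case 0 thus ?case using x0 x0q by simp
  next
    case (Suc k)
    have "sig q ((x0 + k) mod q) \<in> A" using Suc inv by blast
    moreover have "sig q ((x0 + k) mod q) = (x0 + Suc k) mod q" using x0q
      by (simp add: sig_def mod_Suc_eq)
    ultimately show ?case by simp
  qed
  have "y \<in> A" if y: "y < q" for y
  proof -
    have "(x0 + (y + q - x0)) mod q = y" using y x0q by simp
    thus ?thesis using all[of "y + q - x0"] by simp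
  qed
  thus ?thesis using A by auto
qed

lemma sig_full: "sig q ` {..<q} = {..<q}"
  by (rule endo_inj_surj, auto simp: sig_lt sig_inj)

lemma regular_mat_sig: "regular_mat q = perm_mat q (sig q)"
  unfolding regular_mat_def sig_def by simp

lemma nsubsets_props: assumes "s \<in> set (nsubsets n q)"
  shows "sorted_wrt (<) s" "set s \<subseteq> {..<q}" "length s = n" "distinct s"
proof -
  from assms have s: "s \<in> set (subseqs [0..<q])" and l: "length s = n" unfolding nsubsets_def by auto
  from subseqs_sorted[OF _ s] show "sorted_wrt (<) s" "set s \<subseteq> {..<q}" by auto
  show "length s = n" by fact
  show "distinct s" using subseqs_distinctD[OF s] by simp
qed

lemma nsubsets_distinct: "distinct (map set (nsubsets n q))"
  unfolding nsubsets_def by (rule distinct_map_filter, rule distinct_set_subseqs, simp)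

lemma nsubsets_exists: assumes "X \<subseteq> {..<q}" "card X = n"
  shows "\<exists>s \<in> set (nsubsets n q). set s = X"
proof -
  from assms have "X \<in> set ` set (subseqs [0..<q])" by (intro subset_subseqs, auto)
  then obtain s where s: "s \<in> set (subseqs [0..<q])" and X: "X = set s" by auto
  have "distinct s" using subseqs_distinctD[OF s] by simp
  hence "length s = n" using assms X distinct_card by metis
  thus ?thesis using s X unfolding nsubsets_def by auto
qed

definition tauS :: "nat \<Rightarrow> nat \<Rightarrow> nat \<Rightarrow> nat" where
  "tauS n q j = (if j < length (nsubsets n q) then (THE i. i < length (nsubsets n q) \<and>
      set (nsubsets n q ! i) = sig q ` set (nsubsets n q ! j)) else j)"

lemma nsub_nth: "j < length (nsubsets n q) \<Longrightarrow> sorted_wrt (<) (nsubsets n q ! j) \<and> set (nsubsets n q ! j) \<subseteq> {..<q}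
   \<and> length (nsubsets n q ! j) = n \<and> distinct (nsubsets n q ! j) \<and> card (set (nsubsets n q ! j)) = n"
  using nsubsets_props[OF nth_mem, of j n q] distinct_card by metis

lemma idx_unique: assumes "i < length (nsubsets n q)" "i' < length (nsubsets n q)"
  "set (nsubsets n q ! i) = set (nsubsets n q ! i')" shows "i = i'"
proof -
  have "map set (nsubsets n q) ! i = map set (nsubsets n q) ! i'" using assms by simp
  thus ?thesis using nth_eq_iff_index_eq[OF nsubsets_distinct] assms by simp
qed

lemma idx_exists: assumes "X \<subseteq> {..<q}" "card X = n"
  shows "\<exists>i < length (nsubsets n q). set (nsubsets n q ! i) = X"
  using nsubsets_exists[OF assms] by (auto simp: in_set_conv_nth)

lemma tauS_spec: assumes j: "j < length (nsubsets n q)"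
  shows "tauS n q j < length (nsubsets n q) \<and> set (nsubsets n q ! tauS n q j) = sig q ` set (nsubsets n q ! j)"
proof -
  let ?m = "length (nsubsets n q)"
  let ?X = "sig q ` set (nsubsets n q ! j)"
  from nsub_nth[OF j] have X: "?X \<subseteq> {..<q}" "card ?X = n" using sig_img sig_card by auto
  from idx_exists[OF X] obtain i where i: "i < ?m" "set (nsubsets n q ! i) = ?X" by auto
  have ex1: "\<exists>!i. i < ?m \<and> set (nsubsets n q ! i) = ?X"
    using i idx_unique by (intro ex1I[of _ i], auto)
  show ?thesis unfolding tauS_def using j theI'[OF ex1] by simp
qed

lemma tauS_lt: "j < length (nsubsets n q) \<Longrightarrow> tauS n q j < length (nsubsets n q)"
  using tauS_spec by blast

lemma tauS_set: "j < length (nsubsets n q) \<Longrightarrow> set (nsubsets n q ! tauS n q j) = sig q ` set (nsubsets n q ! j)"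
  using tauS_spec by blast

lemma tauS_inj: "inj_on (tauS n q) {..<length (nsubsets n q)}"
proof (rule inj_onI)
  fix x y assume x: "x \<in> {..<length (nsubsets n q)}" and y: "y \<in> {..<length (nsubsets n q)}"
    and e: "tauS n q x = tauS n q y"
  from x y have x': "x < length (nsubsets n q)" and y': "y < length (nsubsets n q)" by auto
  have "sig q ` set (nsubsets n q ! x) = sig q ` set (nsubsets n q ! y)"
    using tauS_set[OF x'] tauS_set[OF y'] e by simp
  moreover have "set (nsubsets n q ! x) \<subseteq> {..<q}" "set (nsubsets n q ! y) \<subseteq> {..<q}"
    using nsub_nth[OF x'] nsub_nth[OF y'] by auto
  ultimately have "set (nsubsets n q ! x) = set (nsubsets n q ! y)"
    using inj_on_image_eq_iff[OF sig_inj] by blast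
  thus "x = y" using idx_unique x y by auto
qed

lemma tauS_pow: assumes j: "j < length (nsubsets n q)"
  shows "(tauS n q ^^ k) j < length (nsubsets n q) \<and> set (nsubsets n q ! ((tauS n q ^^ k) j)) = (sig q ^^ k) ` set (nsubsets n q ! j)"
proof (induct k)
  case 0 thus ?case using j by simp
next
  case (Suc k)
  hence lt: "(tauS n q ^^ k) j < length (nsubsets n q)" by auto
  have "set (nsubsets n q ! ((tauS n q ^^ Suc k) j)) = sig q ` set (nsubsets n q ! ((tauS n q ^^ k) j))"
    using tauS_set[OF lt] by simp
  also have "\<dots> = sig q ` ((sig q ^^ k) ` set (nsubsets n q ! j))" using Suc by simp
  also have "\<dots> = (sig q ^^ Suc k) ` set (nsubsets n q ! j)" by (simp add: image_comp)
  finally show ?case using tauS_lt[OF lt] by simp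
qed

lemma tauS_period: assumes j: "j < length (nsubsets n q)"
  shows "(tauS n q ^^ q) j = j"
proof -
  from tauS_pow[OF j, of q] have lt: "(tauS n q ^^ q) j < length (nsubsets n q)"
    and s: "set (nsubsets n q ! ((tauS n q ^^ q) j)) = (sig q ^^ q) ` set (nsubsets n q ! j)" by auto
  have pw: "(sig q ^^ q) x = x" if "x \<in> set (nsubsets n q ! j)" for x
  proof -
    have "x < q" using nsub_nth[OF j] that by auto
    thus "(sig q ^^ q) x = x" using sig_pow by simp
  qed
  have "(sig q ^^ q) ` set (nsubsets n q ! j) = (\<lambda>x. x) ` set (nsubsets n q ! j)"
    by (rule image_cong, auto simp: pw)
  hence "(sig q ^^ q) ` set (nsubsets n q ! j) = set (nsubsets n q ! j)" by simp
  thus ?thesis using idx_unique[OF lt j] s by simp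
qed

lemma tauS_fixed_count: assumes q: "0 < q"
  shows "card {j. j < length (nsubsets n q) \<and> tauS n q j = j} = (if n = 0 \<or> n = q then 1 else 0)"
proof -
  let ?m = "length (nsubsets n q)"
  let ?S = "\<lambda>j. set (nsubsets n q ! j)"
  have fix_iff: "tauS n q j = j \<longleftrightarrow> (?S j = {} \<or> ?S j = {..<q})" if j: "j < ?m" for j
  proof
    assume "tauS n q j = j"
    hence "sig q ` ?S j = ?S j" using tauS_set[OF j] by simp
    thus "?S j = {} \<or> ?S j = {..<q}" using sig_invariant nsub_nth[OF j] by blast
  next
    assume "?S j = {} \<or> ?S j = {..<q}"
    hence "sig q ` ?S j = ?S j" using sig_full by auto
    thus "tauS n q j = j" using idx_unique[OF tauS_lt[OF j] j] tauS_set[OF j] by simp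
  qed
  have single: "card {j. j < ?m \<and> ?S j = X} = 1" if X: "X \<subseteq> {..<q}" "card X = n" for X
  proof -
    from idx_exists[OF X] obtain i where i: "i < ?m" "?S i = X" by auto
    have "{j. j < ?m \<and> ?S j = X} = {i}" using i idx_unique by auto
    thus ?thesis by simp
  qed
  have "{j. j < ?m \<and> tauS n q j = j} = {j. j < ?m \<and> (?S j = {} \<or> ?S j = {..<q})}" using fix_iff by auto
  also have "\<dots> = (if n = 0 then {j. j < ?m \<and> ?S j = {}} else if n = q then {j. j < ?m \<and> ?S j = {..<q}} else {})"
  proof -
    have c: "j < ?m \<Longrightarrow> card (?S j) = n" for j using nsub_nth by blast
    show ?thesis using q c by (auto, force+)
  qed
  finally show ?thesis using single[of "{}"] single[of "{..<q}"] q by auto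
qed

definition cyc_mat :: "nat \<Rightarrow> 'a :: field mat" where
  "cyc_mat n = mat n n (\<lambda>(a,b). if (if b = n - 1 then a = 0 else a = Suc b) then 1 else 0)"

lemma det_cyc_mat: assumes n: "0 < n" shows "det (cyc_mat n :: 'a :: field mat) = (-1) ^ (n - 1)"
proof -
  let ?C = "cyc_mat n :: 'a mat"
  have C: "?C \<in> carrier_mat n n" unfolding cyc_mat_def by auto
  have "det ?C = (\<Sum>a<n. ?C $$ (a, n - 1) * cofactor ?C a (n - 1))"
    by (rule laplace_expansion_column[OF C], insert n, auto)
  also have "\<dots> = (\<Sum>a<n. if a = 0 then cofactor ?C a (n - 1) else 0)"
    by (rule sum.cong, auto simp: cyc_mat_def)
  also have "\<dots> = cofactor ?C 0 (n - 1)" using n by simp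
  also have "mat_delete ?C 0 (n - 1) = 1\<^sub>m (n - 1)"
    by (rule eq_matI, auto simp: mat_delete_def cyc_mat_def)
  hence "cofactor ?C 0 (n - 1) = (-1) ^ (n - 1)" unfolding cofactor_def by simp
  finally show ?thesis .
qed

lemma det_zero_col: assumes A: "(A :: 'a :: field mat) \<in> carrier_mat n n" and b: "b < n"
  and z: "\<And>a. a < n \<Longrightarrow> A $$ (a, b) = 0" shows "det A = 0"
proof -
  have "det A = (\<Sum>a<n. A $$ (a, b) * cofactor A a b)" by (rule laplace_expansion_column[OF A b])
  also have "\<dots> = 0" using z by simp
  finally show ?thesis .
qed

lemma diag_mult_left: assumes B: "B \<in> carrier_mat m m" and i: "i < m" and j: "j < m"
  shows "(mat m m (\<lambda>(i,j). if i = j then d i else 0) * B) $$ (i,j) = d i * B $$ (i,j)"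
proof -
  have "(mat m m (\<lambda>(i,j). if i = j then d i else 0) * B) $$ (i,j) = (\<Sum>c = 0..<m. (if i = c then d i else 0) * B $$ (c, j))"
    using B i j by (simp add: scalar_prod_def)
  also have "\<dots> = (\<Sum>c = 0..<m. if c = i then d i * B $$ (c, j) else 0)" by (rule sum.cong, auto)
  also have "\<dots> = d i * B $$ (i,j)" using i by simp
  finally show ?thesis .
qed

lemma diag_mult_right: assumes B: "B \<in> carrier_mat m m" and i: "i < m" and j: "j < m"
  shows "(B * mat m m (\<lambda>(i,j). if i = j then d i else 0)) $$ (i,j) = B $$ (i,j) * d j"
proof -
  have "(B * mat m m (\<lambda>(i,j). if i = j then d i else 0)) $$ (i,j) = (\<Sum>c = 0..<m. B $$ (i, c) * (if c = j then d c else 0))"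
    using B i j by (simp add: scalar_prod_def)
  also have "\<dots> = (\<Sum>c = 0..<m. if c = j then B $$ (i, j) * d j else 0)" by (rule sum.cong, auto)
  also have "\<dots> = B $$ (i,j) * d j" using j by simp
  finally show ?thesis .
qed

lemma submatrix_regular: assumes I: "sorted_wrt (<) I" "set I \<subseteq> {..<q}" "length I = n" "distinct I"
  and J: "sorted_wrt (<) J" "set J \<subseteq> {..<q}" "length J = n" "distinct J"
  shows "submatrix (regular_mat q :: 'a :: field mat) (set I) (set J) = mat n n (\<lambda>(a,b). if sig q (J ! b) = I ! a then 1 else 0)"
proof -
  have cI: "card {i. i < dim_row (regular_mat q :: 'a mat) \<and> i \<in> set I} = n"
  proof -
    have "{i. i < dim_row (regular_mat q :: 'a mat) \<and> i \<in> set I} = set I" using I(2) by (auto simp: regular_mat_sig)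
    thus ?thesis using distinct_card[OF I(4)] I(3) by simp
  qed
  have cJ: "card {i. i < dim_col (regular_mat q :: 'a mat) \<and> i \<in> set J} = n"
  proof -
    have "{i. i < dim_col (regular_mat q :: 'a mat) \<and> i \<in> set J} = set J" using J(2) by (auto simp: regular_mat_sig)
    thus ?thesis using distinct_card[OF J(4)] J(3) by simp
  qed
  show ?thesis
  proof (rule eq_matI)
    fix a b assume a: "a < dim_row (mat n n (\<lambda>(a,b). if sig q (J ! b) = I ! a then 1 else (0::'a)))"
      and b: "b < dim_col (mat n n (\<lambda>(a,b). if sig q (J ! b) = I ! a then 1 else (0::'a)))"
    hence a: "a < n" and b: "b < n" by auto
    have Ia: "I ! a < q" using I(2,3) a nth_mem by blast
    have Jb: "J ! b < q" using J(2,3) b nth_mem by blast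
    have "submatrix (regular_mat q :: 'a mat) (set I) (set J) $$ (a,b) = regular_mat q $$ (pick (set I) a, pick (set J) b)"
      by (rule submatrix_index, insert cI cJ a b, auto)
    also have "\<dots> = regular_mat q $$ (I ! a, J ! b)" using pick_sorted[OF I(1)] pick_sorted[OF J(1)] a b I(3) J(3) by simp
    also have "\<dots> = (if sig q (J ! b) = I ! a then 1 else 0)" unfolding regular_mat_sig using Ia Jb by simp
    finally show "submatrix (regular_mat q :: 'a mat) (set I) (set J) $$ (a,b) = mat n n (\<lambda>(a,b). if sig q (J ! b) = I ! a then 1 else (0::'a)) $$ (a,b)"
      using a b by simp
  qed (insert cI cJ, auto simp: dim_submatrix)
qed

lemma det_sub_cases: assumes I: "sorted_wrt (<) I" "set I \<subseteq> {..<q}" "length I = n" "distinct I"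
  and J: "sorted_wrt (<) J" "set J \<subseteq> {..<q}" "length J = n" "distinct J" and q: "0 < q"
  shows "det (submatrix (regular_mat q :: 'a :: field mat) (set I) (set J)) =
    (if sig q ` set J = set I then (if q - 1 \<in> set J then (-1) ^ (n - 1) else 1) else 0)"
proof -
  let ?M = "mat n n (\<lambda>(a,b). if sig q (J ! b) = I ! a then 1 else 0) :: 'a mat"
  have sub: "submatrix (regular_mat q :: 'a mat) (set I) (set J) = ?M" by (rule submatrix_regular[OF I J])
  have M: "?M \<in> carrier_mat n n" by auto
  have cI: "card (set I) = n" using distinct_card[OF I(4)] I(3) by simp
  have cJ: "card (set J) = n" using distinct_card[OF J(4)] J(3) by simp
  show ?thesis unfolding sub
  proof (cases "sig q ` set J = set I")
    case False
    have "\<exists>b<n. sig q (J ! b) \<notin> set I"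
    proof (rule ccontr)
      assume "\<not> ?thesis"
      hence "sig q ` set J \<subseteq> set I" using J(3) by (auto simp: in_set_conv_nth)
      moreover have "card (sig q ` set J) = card (set I)" using sig_card[OF J(2)] cI cJ by simp
      ultimately have "sig q ` set J = set I" by (intro card_subset_eq, auto)
      thus False using False by simp
    qed
    then obtain b where b: "b < n" and nb: "sig q (J ! b) \<notin> set I" by auto
    have "det ?M = 0"
      by (rule det_zero_col[OF M b], insert nb I(3) b, auto)
    thus "det ?M = (if sig q ` set J = set I then (if q - 1 \<in> set J then (-1) ^ (n - 1) else 1) else 0)"
      using False by simp
  next
    case True
    note eqs = True
    show "det ?M = (if sig q ` set J = set I then (if q - 1 \<in> set J then (-1) ^ (n - 1) else 1) else 0)"
    proof (cases "q - 1 \<in> set J")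
      case False
      have sigS: "x \<in> set J \<Longrightarrow> sig q x = Suc x" for x
      proof -
        assume x: "x \<in> set J"
        hence "x < q" "x \<noteq> q - 1" using J(2) False by auto
        hence "x + 1 < q" by auto
        thus ?thesis unfolding sig_def by simp
      qed
      have "sig q ` set J = Suc ` set J" by (rule image_cong, auto simp: sigS)
      hence setI: "set (map Suc J) = set I" using eqs by simp
      have sM: "sorted_wrt (<) (map Suc J)" using J(1) by (simp add: sorted_wrt_map)
      have IJ: "I = map Suc J" using strict_sorted_equal[OF sM I(1) setI[symmetric]] .
      have "?M = 1\<^sub>m n"
      proof (rule eq_matI)
        fix a b assume "a < dim_row (1\<^sub>m n :: 'a mat)" "b < dim_col (1\<^sub>m n :: 'a mat)"
        hence a: "a < n" and b: "b < n" by auto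
        have "sig q (J ! b) = I ! a \<longleftrightarrow> J ! b = J ! a" unfolding IJ using sigS[of "J ! b"] a b J(3) by simp
        also have "\<dots> \<longleftrightarrow> a = b" using nth_eq_iff_index_eq[OF J(4)] a b J(3) by auto
        finally show "?M $$ (a,b) = 1\<^sub>m n $$ (a,b)" using a b by auto
      qed auto
      thus ?thesis using eqs False by simp
    next
      case True
      have Jne: "J \<noteq> []" using True by auto
      hence n0: "0 < n" using J(3) by auto
      define J' where "J' = butlast J"
      have lastJ: "last J = q - 1"
      proof -
        obtain k where k: "k < n" "J ! k = q - 1" using True J(3) by (auto simp: in_set_conv_nth)
        have l: "last J = J ! (n - 1)" using Jne J(3) by (simp add: last_conv_nth)
        have "J ! k \<le> J ! (n - 1)"
        proof (cases "k = n - 1")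
          case False
          hence "k < n - 1" using k by auto
          thus ?thesis using sorted_wrt_nth_less[OF J(1), of k "n - 1"] n0 J(3) by auto
        qed simp
        moreover have "J ! (n - 1) \<in> set J" using J(3) n0 by simp
        hence "J ! (n - 1) < q" using J(2) by auto
        ultimately show ?thesis using k l by auto
      qed
      have Jdec: "J = J' @ [q - 1]" unfolding J'_def using append_butlast_last_id[OF Jne] lastJ by simp
      have lJ': "length J' = n - 1" unfolding J'_def using J(3) by simp
      from J(1) have sJ': "sorted_wrt (<) J'" and J'lt: "\<forall>x\<in>set J'. x < q - 1"
        unfolding Jdec by (auto simp: sorted_wrt_append)
      have dJ': "distinct J'" using J(4) unfolding Jdec by simp
      have sigS: "x \<in> set J' \<Longrightarrow> sig q x = Suc x" for x
      proof -
        assume "x \<in> set J'"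
        hence "x + 1 < q" using J'lt by auto
        thus ?thesis unfolding sig_def by simp
      qed
      have sigl: "sig q (q - 1) = 0" using q unfolding sig_def by simp
      have "sig q ` set J' = Suc ` set J'" by (rule image_cong, auto simp: sigS)
      hence "sig q ` set J = insert 0 (Suc ` set J')" unfolding Jdec using sigl by simp
      hence setI: "set (0 # map Suc J') = set I" using eqs by simp
      have sM: "sorted_wrt (<) (0 # map Suc J')" using sJ' by (simp add: sorted_wrt_map)
      have IJ: "I = 0 # map Suc J'" using strict_sorted_equal[OF sM I(1) setI[symmetric]] .
      have "?M = cyc_mat n"
      proof (rule eq_matI)
        fix a b assume "a < dim_row (cyc_mat n :: 'a mat)" "b < dim_col (cyc_mat n :: 'a mat)"
        hence a: "a < n" and b: "b < n" by (auto simp: cyc_mat_def)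
        have Jb: "J ! b = (if b < n - 1 then J' ! b else q - 1)" unfolding Jdec using lJ' b
          by (auto simp: nth_append)
        have Ia: "I ! a = (if a = 0 then 0 else Suc (J' ! (a - 1)))" unfolding IJ using a lJ' by (cases a, auto)
        have "(sig q (J ! b) = I ! a) \<longleftrightarrow> (if b = n - 1 then a = 0 else a = Suc b)"
        proof (cases "b = n - 1")
          case True
          thus ?thesis unfolding Jb Ia using sigl n0 by auto
        next
          case False
          hence bl: "b < n - 1" using b by auto
          have sb: "sig q (J ! b) = Suc (J' ! b)" unfolding Jb using bl sigS[of "J' ! b"] lJ' by simp
          show ?thesis
          proof (cases a)
            case 0 thus ?thesis unfolding sb Ia using False by simp
          next
            case (Suc a')
            have "a' < n - 1" using a Suc by auto
            hence "J' ! b = J' ! a' \<longleftrightarrow> b = a'" using nth_eq_iff_index_eq[OF dJ'] bl lJ' by auto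
            thus ?thesis unfolding sb Ia using False Suc by auto
          qed
        qed
        thus "?M $$ (a,b) = cyc_mat n $$ (a,b)" using a b unfolding cyc_mat_def by simp
      qed (auto simp: cyc_mat_def)
      thus ?thesis using eqs True det_cyc_mat[OF n0] by simp
    qed
  qed
qed

lemma ext_pow_regular: "ext_pow n (regular_mat q :: 'a :: field mat) =
   mat (length (nsubsets n q)) (length (nsubsets n q))
     (\<lambda>(i,j). det (submatrix (regular_mat q :: 'a mat) (set (nsubsets n q ! i)) (set (nsubsets n q ! j))))"
  unfolding ext_pow_def Let_def by (simp add: regular_mat_sig)

lemma ext_pow_entry: assumes q: "0 < q" and i: "i < length (nsubsets n q)" and j: "j < length (nsubsets n q)"
  shows "ext_pow n (regular_mat q :: 'a :: field mat) $$ (i,j) =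
    (if tauS n q j = i then (if q - 1 \<in> set (nsubsets n q ! j) then (-1) ^ (n - 1) else 1) else 0)"
proof -
  have e: "sig q ` set (nsubsets n q ! j) = set (nsubsets n q ! i) \<longleftrightarrow> tauS n q j = i"
    using tauS_set[OF j] idx_unique[OF tauS_lt[OF j] i] by auto
  have "ext_pow n (regular_mat q :: 'a :: field mat) $$ (i,j) = 
     det (submatrix (regular_mat q :: 'a mat) (set (nsubsets n q ! i)) (set (nsubsets n q ! j)))"
    unfolding ext_pow_regular using i j by simp
  also have "\<dots> = (if sig q ` set (nsubsets n q ! j) = set (nsubsets n q ! i) then
     (if q - 1 \<in> set (nsubsets n q ! j) then (-1) ^ (n - 1) else 1) else 0)"
    by (rule det_sub_cases, insert nsub_nth[OF i] nsub_nth[OF j] q, auto)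
  finally show ?thesis unfolding e .
qed

lemma neg1_pow_parity: "even a = even b \<Longrightarrow> (-1 :: 'a :: ring_1) ^ a = (-1) ^ b"
  by (cases "even a", auto)

lemma sign_rel:
  assumes p: "prime (CHAR('a::field))" and q: "q = CHAR('a) ^ k" and j: "j < length (nsubsets n q)"
  shows "((-1 :: 'a) ^ ((n - 1) * \<Sum>(set (nsubsets n q ! tauS n q j)))) * (-1) ^ ((n - 1) * \<Sum>(set (nsubsets n q ! j)))
     = (if q - 1 \<in> set (nsubsets n q ! j) then (-1) ^ (n - 1) else 1)"
proof -
  let ?J = "set (nsubsets n q ! j)"
  have q0: "0 < q" using p q by (simp add: prime_gt_0_nat)
  from nsub_nth[OF j] have Jq: "?J \<subseteq> {..<q}" and cJ: "card ?J = n" by auto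
  have fJ: "finite ?J" by simp
  define X where "X = \<Sum>(set (nsubsets n q ! tauS n q j))"
  define Y where "Y = \<Sum> ?J"
  define t where "t = (if q - 1 \<in> ?J then 1 else (0::nat))"
  have X: "X = (\<Sum>x\<in>?J. sig q x)" unfolding X_def tauS_set[OF j]
    by (rule sum.reindex_cong[OF inj_on_subset[OF sig_inj Jq] refl], simp)
  have "(\<Sum>x\<in>?J. sig q x + (if x = q - 1 then q else 0)) = (\<Sum>x\<in>?J. x + 1)"
  proof (rule sum.cong[OF refl])
    fix x assume "x \<in> ?J"
    hence x: "x < q" using Jq by auto
    show "sig q x + (if x = q - 1 then q else 0) = x + 1"
    proof (cases "x = q - 1")
      case True thus ?thesis using x q0 unfolding sig_def by simp
    next
      case False hence "x + 1 < q" using x by auto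
      thus ?thesis using False unfolding sig_def by simp
    qed
  qed
  hence XY: "X + q * t = Y + n" unfolding X Y_def t_def sum.distrib using cJ fJ
    by (simp add: sum.delta', auto split: if_splits)
  show ?thesis
  proof (cases "CHAR('a) = 2")
    case True
    have "(of_nat 2 :: 'a) = 0" using True of_nat_eq_0_iff_char_dvd[of 2, where 'a='a] by simp
    hence "(1::'a) + 1 = 0" by simp
    hence m1: "(-1 :: 'a) = 1" by (simp add: eq_neg_iff_add_eq_0)
    show ?thesis unfolding m1 by simp
  next
    case False
    have "CHAR('a) > 2" using prime_ge_2_nat[OF p] False by linarith
    hence "odd (CHAR('a))" using prime_odd_nat[OF p] by blast
    hence oq: "odd q" unfolding q by simp
    have lhs: "((-1 :: 'a) ^ ((n - 1) * X)) * (-1) ^ ((n - 1) * Y) = (-1) ^ ((n - 1) * X + (n - 1) * Y)"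
      by (simp add: power_add)
    have rhs: "(if q - 1 \<in> ?J then (-1) ^ (n - 1) else 1) = (-1 :: 'a) ^ ((n - 1) * t)"
      unfolding t_def by simp
    have par: "even ((n - 1) * X + (n - 1) * Y) = even ((n - 1) * t)"
    proof (cases "even (n - 1)")
      case True thus ?thesis by simp
    next
      case False
      hence n1: "n \<ge> 1" by (cases n, auto)
      hence n: "even n" using False by (cases n, auto)
      have "(n - 1) * X + (n - 1) * Y = (n - 1) * (X + Y)" by (rule distrib_left[symmetric])
      moreover have "even (X + Y) = even t"
      proof -
        obtain r where r: "q = 2 * r + 1" using oq oddE by blast
        have t01: "t = 0 \<or> t = 1" unfolding t_def by auto
        from n obtain n' where n': "n = 2 * n'" by (auto elim: evenE)
        show ?thesis using XY t01 unfolding r n' by (auto; presburger)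
      qed
      ultimately show ?thesis using False by simp
    qed
    show ?thesis unfolding X_def[symmetric] Y_def[symmetric] lhs rhs by (rule neg1_pow_parity[OF par])
  qed
qed

lemma ext_pow_similar_perm:
  assumes p: "prime (CHAR('a::field))" and q: "q = CHAR('a) ^ k"
  shows "similar_mat (ext_pow n (regular_mat q :: 'a mat)) (perm_mat (length (nsubsets n q)) (tauS n q))"
proof -
  let ?m = "length (nsubsets n q)"
  let ?A = "ext_pow n (regular_mat q :: 'a mat)"
  let ?P = "perm_mat ?m (tauS n q) :: 'a mat"
  have q0: "0 < q" using p q by (simp add: prime_gt_0_nat)
  define c where "c j = (-1 :: 'a) ^ ((n - 1) * \<Sum>(set (nsubsets n q ! j)))" for j
  define D where "D = mat ?m ?m (\<lambda>(i,j). if i = j then c i else 0)"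
  have Dc: "D \<in> carrier_mat ?m ?m" unfolding D_def by auto
  have Ac: "?A \<in> carrier_mat ?m ?m" unfolding ext_pow_regular by auto
  have cc: "c i * c i = 1" for i
  proof -
    have "c i * c i = (-1 :: 'a) ^ ((n - 1) * \<Sum>(set (nsubsets n q ! i)) + (n - 1) * \<Sum>(set (nsubsets n q ! i)))"
      unfolding c_def by (simp add: power_add)
    also have "\<dots> = 1" by (rule neg_one_even_power, simp)
    finally show ?thesis .
  qed
  have DD: "D * D = 1\<^sub>m ?m"
  proof (rule eq_matI)
    fix i j assume "i < dim_row (1\<^sub>m ?m :: 'a mat)" "j < dim_col (1\<^sub>m ?m :: 'a mat)"
    hence i: "i < ?m" and j: "j < ?m" by auto
    have "(D * D) $$ (i,j) = c i * D $$ (i,j)" unfolding D_def by (rule diag_mult_left[OF _ i j], auto)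
    thus "(D * D) $$ (i,j) = 1\<^sub>m ?m $$ (i,j)" using i j cc unfolding D_def by auto
  qed (insert Dc, auto)
  have ADPD: "?A = D * ?P * D"
  proof (rule eq_matI)
    fix i j assume "i < dim_row (D * ?P * D)" "j < dim_col (D * ?P * D)"
    hence i: "i < ?m" and j: "j < ?m" using Dc by auto
    have DP: "D * ?P \<in> carrier_mat ?m ?m" using Dc by auto
    have "(D * ?P * D) $$ (i,j) = (D * ?P) $$ (i,j) * c j" unfolding D_def
      by (rule diag_mult_right[OF _ i j], insert DP, unfold D_def)
    also have "(D * ?P) $$ (i,j) = c i * ?P $$ (i,j)" unfolding D_def
      by (rule diag_mult_left[OF _ i j], auto)
    finally have "(D * ?P * D) $$ (i,j) = (if tauS n q j = i then c i * c j else 0)" using i j by simp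
    also have "\<dots> = ?A $$ (i,j)" unfolding ext_pow_entry[OF q0 i j]
      using sign_rel[OF p q j] unfolding c_def by auto
    finally show "?A $$ (i,j) = (D * ?P * D) $$ (i,j)" ..
  qed (insert Ac Dc, auto)
  have "similar_mat_wit ?A ?P D D"
    by (rule similar_mat_witI[OF DD DD ADPD Ac _ Dc Dc], auto)
  thus ?thesis unfolding similar_mat_def by blast
qed

theorem lemma4p3:
  fixes p q k n :: nat
  assumes "prime p" and "CHAR('a::field) = p" and "q = p ^ k"
  shows "\<exists>f. green (ext_pow n (regular_mat q :: 'a mat)) f \<and> in_PKC TYPE('a) q f \<and>
           f 1 = (if n = 0 \<or> n = q then 1 else 0)"
proof -
  have p: "prime (CHAR('a))" using assms by simp
  have q: "q = CHAR('a) ^ k" using assms by simp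
  have q0: "0 < q" using p q by (simp add: prime_gt_0_nat)
  let ?m = "length (nsubsets n q)"
  let ?t = "tauS n q"
  have "\<exists>n_as. jordan_nf (perm_mat ?m ?t :: 'a mat) n_as \<and> (\<forall>(k,a)\<in>set n_as. a = 1) \<and>
       length (filter (\<lambda>(k,a). k = 1) n_as) = card {x. x < ?m \<and> ?t x = x}"
    by (rule perm_jordan[OF p q], rule tauS_lt, assumption, rule tauS_inj, rule tauS_period, assumption)
  then obtain n_as where jnf: "jordan_nf (perm_mat ?m ?t :: 'a mat) n_as"
    and ev: "\<forall>(k,a)\<in>set n_as. a = 1"
    and cnt: "length (filter (\<lambda>(k,a). k = 1) n_as) = card {x. x < ?m \<and> ?t x = x}" by blast
  have jnfA: "jordan_nf (ext_pow n (regular_mat q :: 'a mat)) n_as"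
    using jnf similar_mat_trans[OF ext_pow_similar_perm[OF p q]] unfolding jordan_nf_def by blast
  define f where "f r = int (length (filter (\<lambda>(k,a). k = r) n_as))" for r
  have gA: "green (ext_pow n (regular_mat q :: 'a mat)) f" unfolding green_def f_def using jnfA ev by blast
  have gP: "green (perm_mat ?m ?t :: 'a mat) f" unfolding green_def f_def using jnf ev by blast
  have img: "?t ` {..<?m} = {..<?m}"
    by (rule endo_inj_surj, insert tauS_lt tauS_inj, auto)
  have perm: "?t permutes {..<?m}"
    by (rule bij_imp_permutes, unfold bij_betw_def, insert img tauS_inj, auto simp: tauS_def)
  have Cset: "is_C_set q ?m ?t" unfolding is_C_set_def using perm tauS_period by auto
  have pkc: "in_PKC TYPE('a) q f" unfolding in_PKC_def
    by (rule exI[of _ "[(1, ?m, ?t)]"], rule exI[of _ "[f]"], insert Cset gP, auto)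
  have "f 1 = (if n = 0 \<or> n = q then 1 else 0)" unfolding f_def cnt tauS_fixed_count[OF q0] by simp
  thus ?thesis using gA pkc by blast
qed

end
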